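(* Let $M$ be a positive integer, $q\in(q_{KL},M+1]$, and let $x_1\dots x_N$ be a word occurring in some sequence of $\mathbf V_q$. Let $(p_n)\subset(1,M+1]$ be an increasing sequence converging to $q$ such that $\alpha(p_n)\in\mathbf V$ for every $n\ge1$. Then $x_1\dots x_N$ occurs in some sequence of $\mathbf V_{p_n}$ for all sufficiently large $n$.
   Context: Fix a positive integer $M$; all sequences have digits in $\{0,1,\dots,M\}$. For $q\in(1,M+1]$, $\alpha(q)$ is the quasi-greedy $q$-expansion of $1$ (lexicographically largest sequence $(a_i)$ not ending in $0^\infty$ with $\sum a_iq^{-i}=1$). Sequences are compared lexicographically; $\overline{(x_i)}=(M-x_1)(M-x_2)\dots$; $\sigma$ is the left shift. $\mathbf V_q$ is the set of $(x_i)$ with $\overline{\alpha(q)}\preccurlyeq\sigma^n((x_i))\preccurlyeq\alpha(q)$ for all $n\ge0$. $\mathbf V$ is the set of sequences $(a_i)$ with $\overline{(a_i)}\preccurlyeq\sigma^n((a_i))\preccurlyeq(a_i)$ for all $n\ge0$. $(\tau_i)_{i\ge0}$ is the Thue–Morse sequence; $q_{KL}$ is the base with $\alpha(q_{KL})=\lambda_1\lambda_2\dots$, $\lambda_i=k+\tau_i-\tau_{i-1}$ if $M=2k$, $\lambda_i=k+\tau_i$ if $M=2k+1$. *)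

theory Defs
  imports Complex_Main
begin

text \<open>Sequences are functions nat \<Rightarrow> nat; the paper's x_1 x_2 ... corresponds to x 0, x 1, ...\<close>

definition digits :: "nat \<Rightarrow> (nat \<Rightarrow> nat) \<Rightarrow> bool" where
  "digits M x \<longleftrightarrow> (\<forall>i. x i \<le> M)"

definition lex_less :: "(nat \<Rightarrow> nat) \<Rightarrow> (nat \<Rightarrow> nat) \<Rightarrow> bool" where
  "lex_less a b \<longleftrightarrow> (\<exists>n. (\<forall>i<n. a i = b i) \<and> a n < b n)"

definition lex_le :: "(nat \<Rightarrow> nat) \<Rightarrow> (nat \<Rightarrow> nat) \<Rightarrow> bool" where
  "lex_le a b \<longleftrightarrow> a = b \<or> lex_less a b"

definition reflect :: "nat \<Rightarrow> (nat \<Rightarrow> nat) \<Rightarrow> (nat \<Rightarrow> nat)" where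
  "reflect M x = (\<lambda>i. M - x i)"

definition shift :: "nat \<Rightarrow> (nat \<Rightarrow> nat) \<Rightarrow> (nat \<Rightarrow> nat)" where
  "shift n x = (\<lambda>i. x (i + n))"

definition expansions_of_one :: "nat \<Rightarrow> real \<Rightarrow> (nat \<Rightarrow> nat) set" where
  "expansions_of_one M q = {a. digits M a \<and> infinite {i. a i \<noteq> 0}
       \<and> (\<Sum>i. real (a i) / q ^ (i + 1)) = 1}"

definition alpha :: "nat \<Rightarrow> real \<Rightarrow> (nat \<Rightarrow> nat)" where
  "alpha M q = (THE a. a \<in> expansions_of_one M q \<and>
                  (\<forall>b \<in> expansions_of_one M q. lex_le b a))"

definition Vq :: "nat \<Rightarrow> real \<Rightarrow> (nat \<Rightarrow> nat) set" where
  "Vq M q = {x. digits M x \<and> (\<forall>n. lex_le (reflect M (alpha M q)) (shift n x)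
                                    \<and> lex_le (shift n x) (alpha M q))}"

definition VV :: "nat \<Rightarrow> (nat \<Rightarrow> nat) set" where
  "VV M = {a. digits M a \<and> (\<forall>n. lex_le (reflect M a) (shift n a) \<and> lex_le (shift n a) a)}"

fun bitcount :: "nat \<Rightarrow> nat" where
  "bitcount 0 = 0"
| "bitcount (Suc n) = Suc n mod 2 + bitcount (Suc n div 2)"

definition thue_morse :: "nat \<Rightarrow> nat" where
  "thue_morse n = bitcount n mod 2"

text \<open>lam M j = lambda_(j+1).\<close>
definition kl_seq :: "nat \<Rightarrow> nat \<Rightarrow> nat" where
  "kl_seq M j = (if even M
     then nat (int (M div 2) + int (thue_morse (j + 1)) - int (thue_morse j))
     else M div 2 + thue_morse (j + 1))"

definition q_KL :: "nat \<Rightarrow> real" where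
  "q_KL M = (THE q. 1 < q \<and> q \<le> real M + 1 \<and> alpha M q = kl_seq M)"

definition occurs_in :: "nat list \<Rightarrow> (nat \<Rightarrow> nat) \<Rightarrow> bool" where
  "occurs_in w x \<longleftrightarrow> (\<exists>k. \<forall>i < length w. x (k + i) = w ! i)"

end

theory Submission
  imports Defs
begin

definition VB :: "nat \<Rightarrow> (nat \<Rightarrow> nat) \<Rightarrow> (nat \<Rightarrow> nat) set" where
  "VB M a = {x. digits M x \<and> (\<forall>n. lex_le (reflect M a) (shift n x) \<and> lex_le (shift n x) a)}"

lemma up_transfer:
  assumes "lex_le z a" "\<not>(\<forall>i<L. z i = a i)" "\<forall>i<L. y i = z i" "\<forall>i<L. b i = a i"
  shows "lex_less y b"
proof -
  from assms(1,2) have "lex_less z a" unfolding lex_le_def by auto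
  then obtain d where d: "\<forall>i<d. z i = a i" "z d < a d" unfolding lex_less_def by auto
  have "d < L"
  proof (rule ccontr)
    assume "\<not> d < L" then show False using assms(2) d(1) by auto
  qed
  then show ?thesis unfolding lex_less_def using d assms(3,4) by (intro exI[of _ d]) auto
qed

lemma low_transfer:
  assumes "lex_le a z" "\<not>(\<forall>i<L. z i = a i)" "\<forall>i<L. y i = z i" "\<forall>i<L. b i = a i"
  shows "lex_less b y"
proof -
  from assms(1,2) have "lex_less a z" unfolding lex_le_def by auto
  then obtain d where d: "\<forall>i<d. a i = z i" "a d < z d" unfolding lex_less_def by auto
  have "d < L"
  proof (rule ccontr)
    assume "\<not> d < L" then show False using assms(2) d(1) by auto
  qed
  then show ?thesis unfolding lex_less_def using d assms(3,4) by (intro exI[of _ d]) auto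
qed

lemma reflect_reflect: "digits M x \<Longrightarrow> reflect M (reflect M x) = x"
  by (auto simp: reflect_def digits_def)

lemma reflect_mono:
  assumes "digits M x" "digits M y" "lex_le x y"
  shows "lex_le (reflect M y) (reflect M x)"
  using assms(3) unfolding lex_le_def
proof
  assume "lex_less x y"
  then obtain d where d: "\<forall>i<d. x i = y i" "x d < y d" unfolding lex_less_def by auto
  have "y d \<le> M" using assms(2) by (auto simp: digits_def)
  then have "lex_less (reflect M y) (reflect M x)"
    unfolding lex_less_def reflect_def using d by (intro exI[of _ d]) auto
  then show "reflect M y = reflect M x \<or> lex_less (reflect M y) (reflect M x)" by simp
qed auto

lemma shift_reflect: "shift n (reflect M b) = reflect M (shift n b)"
  by (simp add: shift_def reflect_def)

lemma digits_shift: "digits M x \<Longrightarrow> digits M (shift n x)"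
  by (simp add: digits_def shift_def)

lemma digits_reflect: "digits M (reflect M x)"
  by (simp add: digits_def reflect_def)

lemma VV_VB: "b \<in> VV M \<Longrightarrow> b \<in> VB M b"
  by (simp add: VV_def VB_def)

lemma reflect_VB:
  assumes b: "b \<in> VV M"
  shows "reflect M b \<in> VB M b"
proof -
  have db: "digits M b" and h: "\<And>n. lex_le (reflect M b) (shift n b) \<and> lex_le (shift n b) b"
    using b by (auto simp: VV_def)
  have "lex_le (reflect M b) (shift n (reflect M b)) \<and> lex_le (shift n (reflect M b)) b" for n
  proof
    show "lex_le (reflect M b) (shift n (reflect M b))"
      unfolding shift_reflect using reflect_mono[OF digits_shift[OF db] db] h by blast
    have "lex_le (reflect M (shift n b)) (reflect M (reflect M b))"
      using reflect_mono[OF digits_reflect digits_shift[OF db]] h by blast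
    then show "lex_le (shift n (reflect M b)) b"
      unfolding shift_reflect reflect_reflect[OF db] .
  qed
  then show ?thesis by (simp add: VB_def digits_reflect)
qed

lemma lex_less_le: "lex_less a b \<Longrightarrow> lex_le a b"
  by (simp add: lex_le_def)

lemma comb:
  assumes x: "x \<in> VB M a" and b: "b \<in> VV M" and ag: "\<forall>i<L. b i = a i"
  shows "\<exists>y \<in> VB M b. \<forall>i<L. y i = x i"
proof -
  define bad where "bad k \<longleftrightarrow> (\<forall>i<L. x (k+i) = a i) \<or> (\<forall>i<L. x (k+i) = M - a i)" for k
  have dx: "digits M x" using x by (simp add: VB_def)
  have good: "lex_le (shift n y) b \<and> lex_le (reflect M b) (shift n y)"
    if "\<not> bad n" "\<forall>i<L. y (n+i) = x (n+i)" for n y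
  proof -
    have xn: "lex_le (reflect M a) (shift n x)" "lex_le (shift n x) a" using x by (auto simp: VB_def)
    from that(1) have nu: "\<not>(\<forall>i<L. shift n x i = a i)"
      and nl: "\<not>(\<forall>i<L. shift n x i = reflect M a i)"
      by (auto simp: bad_def shift_def reflect_def add.commute)
    have e: "\<forall>i<L. shift n y i = shift n x i" using that(2) by (simp add: shift_def add.commute)
    have e2: "\<forall>i<L. reflect M b i = reflect M a i" using ag by (simp add: reflect_def)
    show ?thesis using up_transfer[OF xn(2) nu e ag] low_transfer[OF xn(1) nl e e2]
      by (simp add: lex_less_le)
  qed
  show ?thesis
  proof (cases "\<exists>k. bad k")
    case False
    have "x \<in> VB M b" using good False dx by (auto simp: VB_def)
    then show ?thesis by auto
  next
    case True
    define k where "k = (LEAST k. bad k)"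
    have bk: "bad k" using True LeastI_ex k_def by metis
    have nb: "\<not> bad n" if "n < k" for n using not_less_Least that k_def by metis
    obtain c where c: "c \<in> VB M b" "\<forall>i<L. c i = x (k+i)"
    proof (cases "\<forall>i<L. x (k+i) = a i")
      case True then show thesis using that[of b] VV_VB[OF b] ag by auto
    next
      case False then have "\<forall>i<L. x (k+i) = M - a i" using bk bad_def by auto
      then show thesis using that[of "reflect M b"] reflect_VB[OF b] ag by (auto simp: reflect_def)
    qed
    have dc: "digits M c" using c by (simp add: VB_def)
    define y where "y i = (if i < k then x i else c (i - k))" for i
    have agree: "\<forall>i<L. y i = x i"
    proof (intro allI impI)
      fix i assume "i < L"
      show "y i = x i"
      proof (cases "i < k")
        case False
        then have "i - k < L" using \<open>i < L\<close> by auto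
        then show ?thesis using c(2) False by (auto simp: y_def)
      qed (simp add: y_def)
    qed
    have "lex_le (shift n y) b \<and> lex_le (reflect M b) (shift n y)" for n
    proof (cases "n < k")
      case True
      have "\<forall>i<L. y (n+i) = x (n+i)"
      proof (intro allI impI)
        fix i assume "i < L"
        show "y (n+i) = x (n+i)"
        proof (cases "n + i < k")
          case False
          then have "n + i - k < L" using \<open>i < L\<close> True by auto
          then show ?thesis using c(2) False by (auto simp: y_def)
        qed (simp add: y_def)
      qed
      then show ?thesis using good nb True by blast
    next
      case False
      then have "shift n y = shift (n - k) c" by (auto simp: shift_def y_def fun_eq_iff)
      then show ?thesis using c(1) by (simp add: VB_def)
    qed
    moreover have "digits M y" using dx dc by (simp add: digits_def y_def)
    ultimately have "y \<in> VB M b" by (simp add: VB_def)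
    then show ?thesis using agree by auto
  qed
qed


definition dg :: "nat \<Rightarrow> real \<Rightarrow> nat" where
  "dg M t = (if real M < t then M else nat (\<lceil>t\<rceil> - 1))"

fun rm :: "nat \<Rightarrow> real \<Rightarrow> nat \<Rightarrow> real" where
  "rm M q 0 = 1"
| "rm M q (Suc n) = q * rm M q n - real (dg M (q * rm M q n))"

definition qg :: "nat \<Rightarrow> real \<Rightarrow> nat \<Rightarrow> nat" where
  "qg M q n = dg M (q * rm M q n)"

lemma dg_le: "dg M t \<le> M"
proof (cases "real M < t")
  case False
  then have "\<lceil>t\<rceil> \<le> int M" by (simp add: ceiling_le_iff)
  then show ?thesis using False by (simp add: dg_def)
qed (simp add: dg_def)

lemma dg_real: "0 < t \<Longrightarrow> \<not> real M < t \<Longrightarrow> real (dg M t) = of_int \<lceil>t\<rceil> - 1"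
proof -
  assume "0 < t" "\<not> real M < t"
  moreover have "t \<le> of_int \<lceil>t\<rceil>" by simp
  ultimately have "1 \<le> \<lceil>t\<rceil>" by linarith
  then show ?thesis using \<open>\<not> real M < t\<close> by (simp add: dg_def)
qed

lemma dg_prop:
  assumes "0 < t" "t \<le> real M + 1"
  shows "0 < t - dg M t \<and> t - dg M t \<le> 1"
proof (cases "real M < t")
  case True then show ?thesis using assms by (simp add: dg_def)
next
  case False
  then show ?thesis using dg_real[OF assms(1) False] ceiling_correct[of t] by linarith
qed

lemma rm_bounds:
  assumes "1 < q" "q \<le> real M + 1"
  shows "0 < rm M q n \<and> rm M q n \<le> 1"
proof (induction n)
  case (Suc n)
  have "0 < q * rm M q n" using Suc assms by simp
  moreover have "q * rm M q n \<le> real M + 1"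
    using Suc assms mult_mono[of q "real M + 1" "rm M q n" 1] by simp
  ultimately show ?case using dg_prop by simp
qed simp

lemma qg_digits: "digits M (qg M q)"
  by (simp add: digits_def qg_def dg_le)

lemma partial_sum:
  assumes "1 < q"
  shows "(\<Sum>i<n. real (qg M q i) / q ^ (i+1)) = 1 - rm M q n / q ^ n"
proof (induction n)
  case (Suc n)
  have qn: "q ^ n > 0" using assms by simp
  have "rm M q (Suc n) / q ^ Suc n = q * rm M q n / (q * q ^ n) - real (qg M q n) / q ^ (n+1)"
    by (simp add: qg_def diff_divide_distrib)
  also have "q * rm M q n / (q * q ^ n) = rm M q n / q ^ n" using assms by simp
  finally show ?case using Suc by simp
qed simp

lemma digits_summable:
  assumes "digits M c" "1 < q"
  shows "summable (\<lambda>i. real (c i) / q ^ (i+1))"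
proof (rule summable_comparison_test')
  show "summable (\<lambda>i. real M * (1/q) ^ i)"
    using assms(2) by (intro summable_mult summable_geometric) simp
  fix n :: nat
  have "real (c n) \<le> real M" using assms(1) by (simp add: digits_def)
  moreover have "q ^ n \<le> q ^ (n+1)" using assms(2) by simp
  moreover have "0 < q ^ n" using assms(2) by simp
  ultimately have "real (c n) / q ^ (n+1) \<le> real M / q ^ n"
    by (meson frac_le of_nat_0_le_iff order_trans)
  then show "norm (real (c n) / q ^ (n+1)) \<le> real M * (1/q) ^ n"
    using assms(2) by (simp add: power_one_over)
qed

lemma qg_sums:
  assumes "1 < q" "q \<le> real M + 1"
  shows "(\<lambda>i. real (qg M q i) / q ^ (i+1)) sums 1"
proof -
  have "(\<lambda>n. rm M q n / q ^ n) \<longlonglongrightarrow> 0"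
  proof (rule real_tendsto_sandwich[where f="\<lambda>n. 0" and h="\<lambda>n. (1/q) ^ n"])
    show "(\<lambda>n. (1/q) ^ n) \<longlonglongrightarrow> 0" using assms by (intro LIMSEQ_power_zero) simp
    show "\<forall>\<^sub>F n in sequentially. rm M q n / q ^ n \<le> (1/q) ^ n"
      using rm_bounds[OF assms] assms by (auto simp: power_one_over divide_right_mono)
    show "\<forall>\<^sub>F n in sequentially. 0 \<le> rm M q n / q ^ n"
      using rm_bounds[OF assms] assms by (auto intro!: always_eventually divide_nonneg_pos less_imp_le)
  qed simp
  then have "(\<lambda>n. 1 - rm M q n / q ^ n) \<longlonglongrightarrow> 1 - 0" by (intro tendsto_diff) auto
  then show ?thesis unfolding sums_def partial_sum[OF assms(1)] by simp
qed

lemma qg_infinite: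
  assumes "1 < q" "q \<le> real M + 1"
  shows "infinite {i. qg M q i \<noteq> 0}"
proof
  assume "finite {i. qg M q i \<noteq> 0}"
  then obtain n0 where n0: "\<forall>i\<ge>n0. qg M q i = 0"
    by (metis (mono_tags, lifting) finite_nat_set_iff_bounded_le mem_Collect_eq not_less_eq_eq)
  have "rm M q (n0 + k) = q ^ k * rm M q n0" for k
  proof (induction k)
    case (Suc k)
    have "dg M (q * rm M q (n0 + k)) = 0" using n0 by (simp add: qg_def)
    then show ?case using Suc by simp
  qed simp
  moreover have r0: "0 < rm M q n0" using rm_bounds[OF assms] by simp
  obtain k where "1 / rm M q n0 < q ^ k" using real_arch_pow[OF assms(1)] by blast
  then have "1 < q ^ k * rm M q n0" using r0 by (simp add: field_simps)
  ultimately show False using rm_bounds[OF assms, of "n0 + k"] by simp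
qed

lemma lex_antisym: "lex_le a b \<Longrightarrow> lex_le b a \<Longrightarrow> a = b"
  unfolding lex_le_def lex_less_def
  by (metis less_asym linorder_neqE_nat)

lemma lex_total: "a \<noteq> b \<Longrightarrow> lex_less a b \<or> lex_less b a"
proof -
  assume "a \<noteq> b"
  then have "\<exists>n. a n \<noteq> b n" by (auto simp: fun_eq_iff)
  define d where "d = (LEAST n. a n \<noteq> b n)"
  have "a d \<noteq> b d" using LeastI_ex[OF \<open>\<exists>n. a n \<noteq> b n\<close>] d_def by simp
  moreover have "\<forall>i<d. a i = b i" using not_less_Least d_def by blast
  ultimately show ?thesis unfolding lex_less_def
    by (metis linorder_neqE_nat)
qed

lemma qg_max:
  assumes "1 < q" "q \<le> real M + 1" "c \<in> expansions_of_one M q"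
  shows "lex_le c (qg M q)"
proof (rule ccontr)
  assume nle: "\<not> lex_le c (qg M q)"
  then have "lex_less (qg M q) c" using lex_total unfolding lex_le_def by blast
  then obtain d where d: "\<forall>i<d. qg M q i = c i" "qg M q d < c d" unfolding lex_less_def by auto
  have dc: "digits M c" and infc: "infinite {i. c i \<noteq> 0}"
    and sc: "(\<Sum>i. real (c i) / q ^ (i+1)) = 1"
    using assms(3) by (auto simp: expansions_of_one_def)
  define t where "t = q * rm M q d"
  have t0: "0 < t" using rm_bounds[OF assms(1,2)] assms(1) by (simp add: t_def)
  have "dg M t < M" using d(2) dc unfolding qg_def t_def[symmetric] digits_def
    by (metis order_less_le_trans)
  then have nt: "\<not> real M < t" by (auto simp: dg_def)
  have "real (c d) \<ge> of_int \<lceil>t\<rceil>"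
    using d(2) dg_real[OF t0 nt] unfolding qg_def t_def[symmetric] by linarith
  then have ct: "real (c d) \<ge> t" using le_of_int_ceiling[of t] by linarith
  have qd: "0 < q ^ d" using assms by simp
  have "(\<Sum>i<Suc d. real (c i) / q ^ (i+1)) = (\<Sum>i<d. real (qg M q i) / q ^ (i+1)) + real (c d) / q ^ (d+1)"
    using d(1) by simp
  also have "\<dots> = 1 - rm M q d / q ^ d + real (c d) / q ^ (d+1)"
    using partial_sum[OF assms(1)] by simp
  also have "\<dots> \<ge> 1 - rm M q d / q ^ d + t / q ^ (d+1)"
    using ct qd assms(1) by (simp add: divide_right_mono)
  also have "1 - rm M q d / q ^ d + t / q ^ (d+1) = 1"
    using qd assms(1) by (simp add: t_def field_simps)
  finally have s1: "(\<Sum>i<Suc d. real (c i) / q ^ (i+1)) \<ge> 1" .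
  have summ: "summable (\<lambda>i. real (c i) / q ^ (i+1))" using digits_summable[OF dc assms(1)] .
  obtain j where j: "j \<ge> Suc d" "c j \<noteq> 0"
    using infc by (metis (mono_tags, lifting) finite_nat_set_iff_bounded_le mem_Collect_eq not_less_eq_eq nat_le_linear)
  have "0 < (\<Sum>i. real (c (i + Suc d)) / q ^ (i + Suc d + 1))"
  proof (rule suminf_pos2)
    show "summable (\<lambda>i. real (c (i + Suc d)) / q ^ (i + Suc d + 1))"
      using summable_ignore_initial_segment[OF summ, of "Suc d"] by simp
    show "\<And>n. 0 \<le> real (c (n + Suc d)) / q ^ (n + Suc d + 1)" using assms(1) by simp
    show "0 < real (c (j - Suc d + Suc d)) / q ^ (j - Suc d + Suc d + 1)"
      using j assms(1) by simp
  qed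
  moreover have "(\<Sum>i. real (c i) / q ^ (i+1)) = (\<Sum>i. real (c (i + Suc d)) / q ^ (i + Suc d + 1)) + (\<Sum>i<Suc d. real (c i) / q ^ (i+1))"
    using suminf_split_initial_segment[OF summ, of "Suc d"] by simp
  ultimately show False using s1 sc by linarith
qed

lemma alpha_qg:
  assumes "1 < q" "q \<le> real M + 1"
  shows "alpha M q = qg M q"
  unfolding alpha_def
proof (rule the_equality)
  show "qg M q \<in> expansions_of_one M q \<and> (\<forall>b\<in>expansions_of_one M q. lex_le b (qg M q))"
    using qg_digits qg_infinite[OF assms] qg_sums[OF assms] qg_max[OF assms]
    by (auto simp: expansions_of_one_def sums_iff)
  then show "\<And>a. a \<in> expansions_of_one M q \<and> (\<forall>b\<in>expansions_of_one M q. lex_le b a) \<Longrightarrow> a = qg M q"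
    using lex_antisym by blast
qed


lemma dg_eventually:
  assumes f: "f \<longlonglongrightarrow> t" and ev: "\<forall>\<^sub>F n in sequentially. f n < t" and t0: "0 < t"
  shows "\<forall>\<^sub>F n in sequentially. dg M (f n) = dg M t"
proof (cases "real M < t")
  case True
  have "\<forall>\<^sub>F n in sequentially. real M < f n" using order_tendstoD(1)[OF f True] .
  then show ?thesis by eventually_elim (use True in \<open>simp add: dg_def\<close>)
next
  case False
  have "of_int \<lceil>t\<rceil> - 1 < t" using ceiling_correct[of t] by simp
  then have "\<forall>\<^sub>F n in sequentially. of_int \<lceil>t\<rceil> - 1 < f n" using order_tendstoD(1)[OF f] by blast
  with ev show ?thesis
  proof eventually_elim
    case (elim n)
    have "f n \<le> of_int \<lceil>t\<rceil>" using elim(1) le_of_int_ceiling[of t] by linarith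
    then have "\<lceil>f n\<rceil> = \<lceil>t\<rceil>" using elim(2) by (intro ceiling_unique) auto
    moreover have "\<not> real M < f n" using False elim(1) by linarith
    ultimately show ?case using False by (simp add: dg_def)
  qed
qed

lemma left_cont:
  assumes q: "1 < q" "q \<le> real M + 1"
    and p: "\<forall>n. 1 < p n \<and> p n < q" "p \<longlonglongrightarrow> q"
  shows "(\<forall>\<^sub>F n in sequentially. (\<forall>j<i. qg M (p n) j = qg M q j) \<and> rm M (p n) i \<le> rm M q i)
     \<and> (\<lambda>n. rm M (p n) i) \<longlonglongrightarrow> rm M q i"
proof (induction i)
  case 0 then show ?case by simp
next
  case (Suc i)
  have pM: "p n \<le> real M + 1" for n using p q by (meson less_le_trans less_imp_le)
  have rp: "0 < rm M (p n) i" for n using rm_bounds[of "p n" M] p pM by auto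
  define t where "t = q * rm M q i"
  have t0: "0 < t" using rm_bounds[OF q] q by (simp add: t_def)
  have tl: "(\<lambda>n. p n * rm M (p n) i) \<longlonglongrightarrow> t" unfolding t_def
    using Suc p(2) by (intro tendsto_mult) auto
  have evl: "\<forall>\<^sub>F n in sequentially. p n * rm M (p n) i < t"
    using conjunct1[OF Suc]
  proof eventually_elim
    case (elim n)
    have "p n * rm M (p n) i < q * rm M (p n) i" using p rp[of n] by simp
    also have "\<dots> \<le> q * rm M q i" using elim q by simp
    finally show ?case by (simp add: t_def)
  qed
  have evd: "\<forall>\<^sub>F n in sequentially. dg M (p n * rm M (p n) i) = dg M t"
    by (rule dg_eventually[OF tl evl t0])
  have A: "\<forall>\<^sub>F n in sequentially. (\<forall>j<Suc i. qg M (p n) j = qg M q j) \<and> rm M (p n) (Suc i) \<le> rm M q (Suc i)"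
    using conjunct1[OF Suc] evd evl
  proof eventually_elim
    case (elim n)
    have "qg M (p n) i = qg M q i" using elim(2) by (simp add: qg_def t_def)
    then have "\<forall>j<Suc i. qg M (p n) j = qg M q j" using elim(1) less_Suc_eq by auto
    moreover have "rm M (p n) (Suc i) \<le> rm M q (Suc i)"
      using elim(2,3) by (simp add: t_def)
    ultimately show ?case by simp
  qed
  have "(\<lambda>n. p n * rm M (p n) i - real (dg M t)) \<longlonglongrightarrow> t - real (dg M t)"
    using tl by (intro tendsto_diff) auto
  moreover have "\<forall>\<^sub>F n in sequentially. p n * rm M (p n) i - real (dg M t) = rm M (p n) (Suc i)"
    using evd by eventually_elim simp
  ultimately have "(\<lambda>n. rm M (p n) (Suc i)) \<longlonglongrightarrow> t - real (dg M t)"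
    by (rule Lim_transform_eventually)
  then have "(\<lambda>n. rm M (p n) (Suc i)) \<longlonglongrightarrow> rm M q (Suc i)" by (simp add: t_def)
  with A show ?case by simp
qed

theorem lemma3p4:
  fixes M :: nat and q :: real and w :: "nat list" and p :: "nat \<Rightarrow> real"
  assumes "M \<ge> 1"
    and "q_KL M < q" and "q \<le> real M + 1"
    and "\<exists>x \<in> Vq M q. occurs_in w x"
    and "\<forall>n. 1 < p n \<and> p n \<le> real M + 1"
    and "strict_mono p"
    and "p \<longlonglongrightarrow> q"
    and "\<forall>n. alpha M (p n) \<in> VV M"
  shows "\<exists>N0. \<forall>n \<ge> N0. \<exists>x \<in> Vq M (p n). occurs_in w x"
proof -
  have inc: "incseq p" using assms(6) by (simp add: strict_mono_mono)
  have plt: "p n < q" for n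
    using assms(6) incseq_le[OF inc assms(7), of "Suc n"] by (metis lessI strict_mono_def less_le_trans)
  have q1: "1 < q" using assms(5) plt[of 0] by (meson less_trans)
  have p': "\<forall>n. 1 < p n \<and> p n < q" using assms(5) plt by auto
  obtain x k where x: "x \<in> Vq M q" "\<forall>i<length w. x (k + i) = w ! i"
    using assms(4) unfolding occurs_in_def by blast
  define x' where "x' = shift k x"
  have sh: "shift n x' = shift (n + k) x" for n by (simp add: x'_def shift_def add.assoc)
  have xb: "lex_le (reflect M (alpha M q)) (shift m x) \<and> lex_le (shift m x) (alpha M q)" for m
    using x(1) by (simp add: Vq_def)
  have "digits M x'" using x(1) by (simp add: Vq_def x'_def digits_shift)
  then have x'V: "x' \<in> VB M (alpha M q)"
    unfolding VB_def using xb sh by simp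
  have x'w: "\<forall>i<length w. x' i = w ! i" using x(2) by (simp add: x'_def shift_def add.commute)
  have "\<forall>\<^sub>F n in sequentially. (\<forall>j<length w. qg M (p n) j = qg M q j)"
    using conjunct1[OF left_cont[OF q1 assms(3) p' assms(7), of "length w"]] by (rule eventually_mono) simp
  then obtain N0 where N0: "\<forall>n\<ge>N0. \<forall>j<length w. qg M (p n) j = qg M q j"
    unfolding eventually_sequentially by blast
  have "\<exists>y \<in> Vq M (p n). occurs_in w y" if "n \<ge> N0" for n
  proof -
    have ag: "\<forall>j<length w. alpha M (p n) j = alpha M q j"
      using N0 that alpha_qg[OF q1 assms(3)] alpha_qg[of "p n" M] assms(5) by auto
    obtain y where y: "y \<in> VB M (alpha M (p n))" "\<forall>i<length w. y i = x' i"
      using comb[OF x'V _ ag] assms(8) by blast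
    have "y \<in> Vq M (p n)" using y(1) by (simp add: Vq_def VB_def)
    moreover have "occurs_in w y" unfolding occurs_in_def using y(2) x'w by (intro exI[of _ 0]) auto
    ultimately show ?thesis by blast
  qed
  then show ?thesis by blast
qed

end
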